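(* Let $\ket{\psi}$ be an $n$-qubit pure state with CP rank $\mathrm{rk}(\ket{\psi})=R$. Then $$\mathcal{C}(\ket{\psi})\le 1-\frac{1}{2^n}\sum_{k=0}^n\binom{n}{k}\max\Big(\frac1R,\;2^{-\min(k,n-k)}\Big).$$
   Context: The CP rank (tensor rank) $\mathrm{rk}(\ket{\psi})$ of an $n$-qubit state is the minimal $r$ such that $\ket{\psi}=\sum_{i=1}^r c_i\bigotimes_{j=1}^n\ket{\phi_i^{(j)}}$ with single-qubit vectors $\ket{\phi_i^{(j)}}$. The concentratable entanglement is $\mathcal{C}(\ket{\psi})=1-\frac{1}{2^{n}}\sum_{\alpha\subseteq [n]}\mathrm{Tr}[\rho_\alpha^2]$, where $\rho_\alpha$ is the reduced density matrix of $\ket{\psi}$ on the qubits in $\alpha$, with $\mathrm{Tr}[\rho_\emptyset^2]=1$. *)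

theory Defs
  imports Complex_Main
begin

text \<open>A basis label is the set S \<subseteq> {..<n} of qubits in state |1>; values outside
  Pow {..<n} are irrelevant. A single-qubit vector is a function bool \<Rightarrow> complex.\<close>

definition is_state :: "nat \<Rightarrow> (nat set \<Rightarrow> complex) \<Rightarrow> bool" where
  "is_state n psi \<longleftrightarrow> (\<Sum>S\<in>Pow {..<n}. (cmod (psi S))\<^sup>2) = 1"

text \<open>Amplitude of the product vector phi 0 \<otimes> ... \<otimes> phi (n-1) at basis label S.\<close>
definition prod_amp :: "nat \<Rightarrow> (nat \<Rightarrow> bool \<Rightarrow> complex) \<Rightarrow> nat set \<Rightarrow> complex" where
  "prod_amp n phi S = (\<Prod>j<n. phi j (j \<in> S))"

definition has_cp_decomp :: "nat \<Rightarrow> (nat set \<Rightarrow> complex) \<Rightarrow> nat \<Rightarrow> bool" where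
  "has_cp_decomp n psi r \<longleftrightarrow>
     (\<exists>(c :: nat \<Rightarrow> complex) (phi :: nat \<Rightarrow> nat \<Rightarrow> bool \<Rightarrow> complex).
        \<forall>S\<in>Pow {..<n}. psi S = (\<Sum>i<r. c i * prod_amp n (phi i) S))"

definition cp_rank :: "nat \<Rightarrow> (nat set \<Rightarrow> complex) \<Rightarrow> nat" where
  "cp_rank n psi = (LEAST r. has_cp_decomp n psi r)"

text \<open>Reduced density matrix on the qubits in alpha (partial trace over the rest):
  rows/columns indexed by subsets x, y of alpha.\<close>
definition reduced_dm :: "nat \<Rightarrow> (nat set \<Rightarrow> complex) \<Rightarrow> nat set \<Rightarrow> nat set \<Rightarrow> nat set \<Rightarrow> complex" where
  "reduced_dm n psi alpha x y =
     (\<Sum>z\<in>Pow ({..<n} - alpha). psi (x \<union> z) * cnj (psi (y \<union> z)))"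

definition purity :: "nat \<Rightarrow> (nat set \<Rightarrow> complex) \<Rightarrow> nat set \<Rightarrow> real" where
  "purity n psi alpha =
     Re (\<Sum>x\<in>Pow alpha. \<Sum>y\<in>Pow alpha. reduced_dm n psi alpha x y * reduced_dm n psi alpha y x)"

definition conc_ent :: "nat \<Rightarrow> (nat set \<Rightarrow> complex) \<Rightarrow> real" where
  "conc_ent n psi = 1 - (1 / 2 ^ n) * (\<Sum>alpha\<in>Pow {..<n}. purity n psi alpha)"

end

theory Submission
  imports Defs
begin

definition ip :: "'x set \<Rightarrow> ('x \<Rightarrow> complex) \<Rightarrow> ('x \<Rightarrow> complex) \<Rightarrow> complex" where
  "ip X u v = (\<Sum>x\<in>X. cnj (u x) * v x)"

lemma ip_self: "ip X u u = of_real (\<Sum>x\<in>X. (cmod (u x))\<^sup>2)"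
  unfolding ip_def of_real_sum by (rule sum.cong) (auto simp del: of_real_power intro: sym[OF complex_norm_square[THEN trans, OF mult.commute]])

lemma ip_swap: "ip X v u = cnj (ip X u v)"
  unfolding ip_def by (simp add: mult.commute)

lemma ip_zero:
  assumes "finite X" "ip X u u = 0" "x \<in> X" shows "u x = 0"
proof -
  have "(\<Sum>x\<in>X. (cmod (u x))\<^sup>2) = 0" using assms(2) by (simp only: ip_self of_real_eq_0_iff)
  then have "\<forall>x\<in>X. (cmod (u x))\<^sup>2 = 0" using assms(1) by (simp add: sum_nonneg_eq_0_iff)
  then show ?thesis using assms(3) by simp
qed

lemma ip_zero_left: "\<forall>x\<in>X. u x = 0 \<Longrightarrow> ip X u v = 0"
  unfolding ip_def by simp

lemma ip_lin_right: "finite I \<Longrightarrow> ip X u (\<lambda>x. \<Sum>j\<in>I. c j * e j x) = (\<Sum>j\<in>I. c j * ip X u (e j))"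
  unfolding ip_def by (simp add: sum_distrib_left sum_distrib_right mult_ac sum.swap[of _ X])

lemma gram_schmidt:
  fixes u :: "'i \<Rightarrow> 'x \<Rightarrow> complex"
  assumes "finite I" "finite X"
  shows "\<exists>e a. (\<forall>i\<in>I. \<forall>j\<in>I. i \<noteq> j \<longrightarrow> ip X (e i) (e j) = 0)
    \<and> (\<forall>i\<in>I. ip X (e i) (e i) = 1 \<or> (\<forall>x\<in>X. e i x = 0))
    \<and> (\<forall>i\<in>I. \<forall>x\<in>X. u i x = (\<Sum>j\<in>I. a i j * e j x))"
  using assms(1)
proof (induction I rule: finite_induct)
  case empty
  then show ?case by simp
next
  case (insert k I)
  then obtain e a where orth: "\<forall>i\<in>I. \<forall>j\<in>I. i \<noteq> j \<longrightarrow> ip X (e i) (e j) = 0"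
    and nrm: "\<forall>i\<in>I. ip X (e i) (e i) = 1 \<or> (\<forall>x\<in>X. e i x = 0)"
    and rep: "\<forall>i\<in>I. \<forall>x\<in>X. u i x = (\<Sum>j\<in>I. a i j * e j x)" by blast
  define c where "c j = ip X (e j) (u k)" for j
  define v where "v x = u k x - (\<Sum>j\<in>I. c j * e j x)" for x
  define s where "s = complex_of_real (sqrt (\<Sum>x\<in>X. (cmod (v x))\<^sup>2))"
  define e' where "e' = e(k := (\<lambda>x. v x / s))"
  define a' where "a' i j = (if i = k then (if j = k then s else c j) else (if j = k then 0 else a i j))" for i j
  have v_orth: "ip X (e j) v = 0" if j: "j \<in> I" for j
  proof -
    have "ip X (e j) v = ip X (e j) (u k) - ip X (e j) (\<lambda>x. \<Sum>j\<in>I. c j * e j x)"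
      unfolding v_def ip_def by (simp add: sum_subtractf right_diff_distrib)
    also have "\<dots> = c j - (\<Sum>l\<in>I. c l * ip X (e j) (e l))"
      using insert(1) by (simp add: ip_lin_right c_def)
    also have "(\<Sum>l\<in>I. c l * ip X (e j) (e l)) = c j * ip X (e j) (e j)"
    proof -
      have "(\<Sum>l\<in>I - {j}. c l * ip X (e j) (e l)) = 0"
        using j orth by (intro sum.neutral) auto
      then show ?thesis using insert(1) j by (simp add: sum.remove[of _ j])
    qed
    finally have eq: "ip X (e j) v = c j - c j * ip X (e j) (e j)" .
    show ?thesis
    proof (cases "ip X (e j) (e j) = 1")
      case True then show ?thesis using eq by simp
    next
      case False then have "\<forall>x\<in>X. e j x = 0" using nrm j by blast
      then show ?thesis by (rule ip_zero_left)
    qed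
  qed
  have vv: "ip X v v = s * s"
    unfolding s_def ip_self
    by (simp add: sum_nonneg flip: of_real_mult)
  have ek_orth: "ip X (e j) (e' k) = 0" if "j \<in> I" for j
    using v_orth[OF that] unfolding e'_def ip_def by (simp add: sum_divide_distrib[symmetric] times_divide_eq_right)
  have ek_norm: "ip X (e' k) (e' k) = 1 \<or> (\<forall>x\<in>X. e' k x = 0)"
  proof (cases "s = 0")
    case True then show ?thesis unfolding e'_def by simp
  next
    case False
    have "cnj s = s" unfolding s_def by simp
    then have "ip X (e' k) (e' k) = ip X v v / (s * s)"
      unfolding e'_def ip_def by (simp add: sum_divide_distrib[symmetric])
    then show ?thesis using vv False by simp
  qed
  have uk: "u k x = (\<Sum>j\<in>insert k I. a' k j * e' j x)" if "x \<in> X" for x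
  proof -
    have "v x = s * (v x / s)"
    proof (cases "s = 0")
      case True then have "ip X v v = 0" using vv by simp
      then have "v x = 0" using ip_zero[OF assms(2) _ that] by blast
      then show ?thesis by simp
    qed simp
    moreover have "(\<Sum>j\<in>I. a' k j * e' j x) = (\<Sum>j\<in>I. c j * e j x)"
      using insert(2) by (intro sum.cong) (auto simp: a'_def e'_def)
    ultimately show ?thesis using insert(1,2) by (simp add: a'_def e'_def v_def)
  qed
  have ui: "u i x = (\<Sum>j\<in>insert k I. a' i j * e' j x)" if "i \<in> I" "x \<in> X" for i x
  proof -
    have "(\<Sum>j\<in>I. a' i j * e' j x) = (\<Sum>j\<in>I. a i j * e j x)"
      using insert(2) that by (intro sum.cong) (auto simp: a'_def e'_def)
    then show ?thesis using insert(1,2) that rep by (auto simp: a'_def)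
  qed
  show ?case
  proof (intro exI[of _ e'] exI[of _ a'] conjI ballI impI)
    fix i j assume ij: "i \<in> insert k I" "j \<in> insert k I" "i \<noteq> j"
    show "ip X (e' i) (e' j) = 0"
    proof -
      consider "i = k" "j \<in> I" | "j = k" "i \<in> I" | "i \<in> I" "j \<in> I" using ij by auto
      then show ?thesis
      proof cases
        case 1 then show ?thesis using ek_orth[of j] ip_swap[of X "e' k" "e' j"] insert(2)
          by (auto simp: e'_def)
      next
        case 2 then show ?thesis using ek_orth[of i] insert(2) by (auto simp: e'_def)
      next
        case 3 then show ?thesis using orth ij insert(2) by (auto simp: e'_def)
      qed
    qed
  next
    fix i assume "i \<in> insert k I"
    then show "ip X (e' i) (e' i) = 1 \<or> (\<forall>x\<in>X. e' i x = 0)"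
      using ek_norm nrm insert(2) by (auto simp: e'_def)
  next
    fix i x assume "i \<in> insert k I" "x \<in> X"
    then show "u i x = (\<Sum>j\<in>insert k I. a' i j * e' j x)" using uk ui by auto
  qed
qed


definition PP :: "'x set \<Rightarrow> 'z set \<Rightarrow> ('x \<Rightarrow> 'z \<Rightarrow> complex) \<Rightarrow> real" where
  "PP X Z M = (\<Sum>x\<in>X. \<Sum>y\<in>X. (cmod (\<Sum>z\<in>Z. M x z * cnj (M y z)))\<^sup>2)"

lemma cmod_sq: "(cmod a)\<^sup>2 = Re (a * cnj a)"
  by (metis Re_complex_of_real complex_norm_square)

lemma PP_quad: "PP X Z M = Re (\<Sum>x\<in>X. \<Sum>y\<in>X. \<Sum>z\<in>Z. \<Sum>z'\<in>Z. M x z * cnj (M y z) * (cnj (M x z') * M y z'))"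
  unfolding PP_def cmod_sq Re_sum[symmetric] cnj_sum
  by (simp add: sum_product)

lemma PP_sym: "PP X Z M = PP Z X (\<lambda>z x. cnj (M x z))"
proof -
  have "PP Z X (\<lambda>z x. cnj (M x z)) = Re (\<Sum>z\<in>Z. \<Sum>z'\<in>Z. \<Sum>x\<in>X. \<Sum>y\<in>X. cnj (M x z) * M x z' * (M y z * cnj (M y z')))"
    by (simp add: PP_quad)
  also have "\<dots> = Re (\<Sum>z\<in>Z. \<Sum>z'\<in>Z. \<Sum>y\<in>X. \<Sum>x\<in>X. cnj (M x z) * M x z' * (M y z * cnj (M y z')))"
    by (rule arg_cong[where f=Re], rule sum.cong[OF refl], rule sum.cong[OF refl], rule sum.swap)
  also have "\<dots> = Re (\<Sum>y\<in>X. \<Sum>x\<in>X. \<Sum>z\<in>Z. \<Sum>z'\<in>Z. cnj (M x z) * M x z' * (M y z * cnj (M y z')))"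
  proof -
    have "\<And>z z'. (\<Sum>y\<in>X. \<Sum>x\<in>X. cnj (M x z) * M x z' * (M y z * cnj (M y z'))) = (\<Sum>y\<in>X. \<Sum>x\<in>X. cnj (M x z) * M x z' * (M y z * cnj (M y z')))" by simp
    have s1: "(\<Sum>z\<in>Z. \<Sum>z'\<in>Z. \<Sum>y\<in>X. \<Sum>x\<in>X. f x y z z') = (\<Sum>y\<in>X. \<Sum>x\<in>X. \<Sum>z\<in>Z. \<Sum>z'\<in>Z. f x y z z')" for f :: "_ \<Rightarrow> _ \<Rightarrow> _ \<Rightarrow> _ \<Rightarrow> complex"
    proof -
      have "(\<Sum>z\<in>Z. \<Sum>z'\<in>Z. \<Sum>y\<in>X. \<Sum>x\<in>X. f x y z z') = (\<Sum>z\<in>Z. \<Sum>y\<in>X. \<Sum>z'\<in>Z. \<Sum>x\<in>X. f x y z z')"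
        by (rule sum.cong[OF refl], rule sum.swap)
      also have "\<dots> = (\<Sum>z\<in>Z. \<Sum>y\<in>X. \<Sum>x\<in>X. \<Sum>z'\<in>Z. f x y z z')"
        by (rule sum.cong[OF refl], rule sum.cong[OF refl], rule sum.swap)
      also have "\<dots> = (\<Sum>y\<in>X. \<Sum>z\<in>Z. \<Sum>x\<in>X. \<Sum>z'\<in>Z. f x y z z')"
        by (rule sum.swap)
      also have "\<dots> = (\<Sum>y\<in>X. \<Sum>x\<in>X. \<Sum>z\<in>Z. \<Sum>z'\<in>Z. f x y z z')"
        by (rule sum.cong[OF refl], rule sum.swap)
      finally show ?thesis .
    qed
    show ?thesis by (subst s1) (rule refl)
  qed
  also have "\<dots> = PP X Z M"
    unfolding PP_quad by (simp add: mult_ac)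
  finally show ?thesis by simp
qed

lemma cs_sum: fixes b :: "'i \<Rightarrow> real" assumes "finite I"
  shows "(\<Sum>i\<in>I. b i)\<^sup>2 \<le> real (card I) * (\<Sum>i\<in>I. (b i)\<^sup>2)"
proof -
  have "0 \<le> (\<Sum>i\<in>I. \<Sum>j\<in>I. (b i - b j)\<^sup>2)" by (intro sum_nonneg) auto
  also have "\<dots> = (\<Sum>i\<in>I. \<Sum>j\<in>I. (b i)\<^sup>2 + (b j)\<^sup>2 - 2 * (b i * b j))"
    by (simp add: power2_diff mult.assoc)
  also have "\<dots> = 2 * (real (card I) * (\<Sum>i\<in>I. (b i)\<^sup>2)) - 2 * (\<Sum>i\<in>I. b i)\<^sup>2"
    by (simp add: sum.distrib sum_subtractf sum_distrib_left sum_distrib_right power2_eq_square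
        sum.swap[of "\<lambda>i j. b j * b j"] mult_ac)
  finally show ?thesis by simp
qed


lemma cnj_mult_self: "cnj a * a = complex_of_real ((cmod a)\<^sup>2)"
  by (metis complex_norm_square mult.commute)

lemma key_orth:
  fixes M :: "'x \<Rightarrow> 'z \<Rightarrow> complex" and e :: "'i \<Rightarrow> 'x \<Rightarrow> complex"
  assumes fin: "finite X" "finite Z" "finite I"
    and orth: "\<forall>i\<in>I. \<forall>j\<in>I. i \<noteq> j \<longrightarrow> ip X (e i) (e j) = 0"
    and nrm: "\<forall>i\<in>I. ip X (e i) (e i) = 1 \<or> (\<forall>x\<in>X. e i x = 0)"
    and M: "\<forall>x\<in>X. \<forall>z\<in>Z. M x z = (\<Sum>i\<in>I. e i x * W i z)"
  shows "(\<Sum>x\<in>X. \<Sum>z\<in>Z. (cmod (M x z))\<^sup>2)\<^sup>2 \<le> real (card I) * PP X Z M"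
proof -
  define W' where "W' i z = (if ip X (e i) (e i) = 1 then W i z else 0)" for i z
  have M': "M x z = (\<Sum>i\<in>I. e i x * W' i z)" if "x \<in> X" "z \<in> Z" for x z
    unfolding M[rule_format, OF that] using nrm that by (intro sum.cong) (auto simp: W'_def)
  have G: "(\<Sum>x\<in>X. cnj (M x z) * M x z') = (\<Sum>i\<in>I. cnj (W' i z) * W' i z')"
    if "z \<in> Z" "z' \<in> Z" for z z'
  proof -
    have "(\<Sum>x\<in>X. cnj (M x z) * M x z') = (\<Sum>x\<in>X. \<Sum>i\<in>I. \<Sum>j\<in>I. cnj (W' i z) * W' j z' * (cnj (e i x) * e j x))"
      using that by (intro sum.cong refl) (simp only: M' cnj_sum sum_product, simp add: mult_ac)
    also have "\<dots> = (\<Sum>i\<in>I. \<Sum>j\<in>I. \<Sum>x\<in>X. cnj (W' i z) * W' j z' * (cnj (e i x) * e j x))"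
    proof -
      have "(\<Sum>x\<in>X. \<Sum>i\<in>I. \<Sum>j\<in>I. f x i j) = (\<Sum>i\<in>I. \<Sum>j\<in>I. \<Sum>x\<in>X. f x i j)" for f :: "_ \<Rightarrow> _ \<Rightarrow> _ \<Rightarrow> complex"
        by (subst sum.swap, rule sum.cong[OF refl], rule sum.swap)
      then show ?thesis .
    qed
    also have "\<dots> = (\<Sum>i\<in>I. \<Sum>j\<in>I. cnj (W' i z) * W' j z' * ip X (e i) (e j))"
      unfolding ip_def by (simp add: sum_distrib_left)
    also have "\<dots> = (\<Sum>i\<in>I. cnj (W' i z) * W' i z' * ip X (e i) (e i))"
    proof (rule sum.cong[OF refl])
      fix i assume i: "i \<in> I"
      have "(\<Sum>j\<in>I - {i}. cnj (W' i z) * W' j z' * ip X (e i) (e j)) = 0"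
        using i orth by (intro sum.neutral) auto
      then show "(\<Sum>j\<in>I. cnj (W' i z) * W' j z' * ip X (e i) (e j)) = cnj (W' i z) * W' i z' * ip X (e i) (e i)"
        using fin(3) i by (simp add: sum.remove[of _ i])
    qed
    also have "\<dots> = (\<Sum>i\<in>I. cnj (W' i z) * W' i z')"
      by (intro sum.cong refl) (simp add: W'_def)
    finally show ?thesis .
  qed
  define b where "b i = (\<Sum>z\<in>Z. (cmod (W' i z))\<^sup>2)" for i
  have T: "(\<Sum>x\<in>X. \<Sum>z\<in>Z. (cmod (M x z))\<^sup>2) = (\<Sum>i\<in>I. b i)"
  proof -
    have "(\<Sum>x\<in>X. \<Sum>z\<in>Z. (cmod (M x z))\<^sup>2) = (\<Sum>z\<in>Z. \<Sum>x\<in>X. (cmod (M x z))\<^sup>2)"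
      by (rule sum.swap)
    also have "\<dots> = (\<Sum>z\<in>Z. Re (\<Sum>x\<in>X. cnj (M x z) * M x z))"
      by (simp add: cnj_mult_self del: of_real_power)
    also have "\<dots> = (\<Sum>z\<in>Z. Re (\<Sum>i\<in>I. cnj (W' i z) * W' i z))"
      by (intro sum.cong refl) (simp add: G)
    also have "\<dots> = (\<Sum>z\<in>Z. \<Sum>i\<in>I. (cmod (W' i z))\<^sup>2)"
      by (simp add: cnj_mult_self del: of_real_power)
    also have "\<dots> = (\<Sum>i\<in>I. b i)" unfolding b_def by (rule sum.swap)
    finally show ?thesis .
  qed
  have "PP X Z M = PP Z X (\<lambda>z x. cnj (M x z))" by (rule PP_sym)
  also have "\<dots> = PP Z I (\<lambda>z i. cnj (W' i z))"
    unfolding PP_def by (intro sum.cong refl) (simp add: G)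
  also have "\<dots> = PP I Z W'"
    by (subst PP_sym) simp
  finally have PPe: "PP X Z M = (\<Sum>i\<in>I. \<Sum>j\<in>I. (cmod (\<Sum>z\<in>Z. W' i z * cnj (W' j z)))\<^sup>2)"
    unfolding PP_def .
  have "(\<Sum>i\<in>I. (b i)\<^sup>2) \<le> PP X Z M"
    unfolding PPe
  proof (rule sum_mono)
    fix i assume i: "i \<in> I"
    have "(\<Sum>z\<in>Z. W' i z * cnj (W' i z)) = complex_of_real (b i)"
      unfolding b_def of_real_sum by (intro sum.cong refl) (rule complex_norm_square[symmetric])
    then have "(b i)\<^sup>2 = (cmod (\<Sum>z\<in>Z. W' i z * cnj (W' i z)))\<^sup>2"
      by simp
    also have "\<dots> \<le> (\<Sum>j\<in>I. (cmod (\<Sum>z\<in>Z. W' i z * cnj (W' j z)))\<^sup>2)"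
      using i fin(3) by (intro member_le_sum) auto
    finally show "(b i)\<^sup>2 \<le> \<dots>" .
  qed
  then have "real (card I) * (\<Sum>i\<in>I. (b i)\<^sup>2) \<le> real (card I) * PP X Z M"
    by (intro mult_left_mono) auto
  then show ?thesis unfolding T using cs_sum[OF fin(3), of b] by linarith
qed

lemma key_general:
  fixes M :: "'x \<Rightarrow> 'z \<Rightarrow> complex" and u :: "'i \<Rightarrow> 'x \<Rightarrow> complex"
  assumes fin: "finite X" "finite Z" "finite I"
    and M: "\<forall>x\<in>X. \<forall>z\<in>Z. M x z = (\<Sum>i\<in>I. u i x * w i z)"
  shows "(\<Sum>x\<in>X. \<Sum>z\<in>Z. (cmod (M x z))\<^sup>2)\<^sup>2 \<le> real (card I) * PP X Z M"
proof -
  obtain e a where orth: "\<forall>i\<in>I. \<forall>j\<in>I. i \<noteq> j \<longrightarrow> ip X (e i) (e j) = 0"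
    and nrm: "\<forall>i\<in>I. ip X (e i) (e i) = 1 \<or> (\<forall>x\<in>X. e i x = 0)"
    and rep: "\<forall>i\<in>I. \<forall>x\<in>X. u i x = (\<Sum>j\<in>I. a i j * e j x)"
    using gram_schmidt[OF fin(3) fin(1), of u] by blast
  have "\<forall>x\<in>X. \<forall>z\<in>Z. M x z = (\<Sum>j\<in>I. e j x * (\<Sum>i\<in>I. a i j * w i z))"
  proof (intro ballI)
    fix x z assume xz: "x \<in> X" "z \<in> Z"
    have "M x z = (\<Sum>i\<in>I. (\<Sum>j\<in>I. a i j * e j x) * w i z)"
      using M xz rep by simp
    also have "\<dots> = (\<Sum>i\<in>I. \<Sum>j\<in>I. a i j * e j x * w i z)"
      by (simp add: sum_distrib_right)
    also have "\<dots> = (\<Sum>j\<in>I. \<Sum>i\<in>I. a i j * e j x * w i z)"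
      by (rule sum.swap)
    also have "\<dots> = (\<Sum>j\<in>I. e j x * (\<Sum>i\<in>I. a i j * w i z))"
      by (simp add: sum_distrib_left mult_ac)
    finally show "M x z = (\<Sum>j\<in>I. e j x * (\<Sum>i\<in>I. a i j * w i z))" .
  qed
  then show ?thesis by (rule key_orth[OF fin orth nrm])
qed


lemma purity_PP:
  "purity n psi alpha = PP (Pow alpha) (Pow ({..<n} - alpha)) (\<lambda>x z. psi (x \<union> z))"
proof -
  have "reduced_dm n psi alpha y x = cnj (reduced_dm n psi alpha x y)" for x y
    unfolding reduced_dm_def by (simp add: mult.commute)
  then show ?thesis
    unfolding purity_def PP_def Re_sum
    by (intro sum.cong refl) (simp add: cmod_sq reduced_dm_def)
qed

lemma T_one:
  assumes "is_state n psi" "alpha \<subseteq> {..<n}"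
  shows "(\<Sum>x\<in>Pow alpha. \<Sum>z\<in>Pow ({..<n} - alpha). (cmod (psi (x \<union> z)))\<^sup>2) = 1"
proof -
  have "(\<Sum>x\<in>Pow alpha. \<Sum>z\<in>Pow ({..<n} - alpha). (cmod (psi (x \<union> z)))\<^sup>2)
      = (\<Sum>p\<in>Pow alpha \<times> Pow ({..<n} - alpha). (cmod (psi (fst p \<union> snd p)))\<^sup>2)"
    by (subst sum.cartesian_product) (simp add: split_def)
  also have "\<dots> = (\<Sum>S\<in>Pow {..<n}. (cmod (psi S))\<^sup>2)"
    by (rule sum.reindex_bij_witness[where i="\<lambda>S. (S \<inter> alpha, S - alpha)" and j="\<lambda>p. fst p \<union> snd p"])
      (use assms(2) in auto)
  also have "\<dots> = 1" using assms(1) unfolding is_state_def .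
  finally show ?thesis .
qed

lemma bound:
  fixes u :: "'i \<Rightarrow> nat set \<Rightarrow> complex"
  assumes "is_state n psi" "alpha \<subseteq> {..<n}" "finite I"
    and "\<forall>x\<in>Pow alpha. \<forall>z\<in>Pow ({..<n} - alpha). psi (x \<union> z) = (\<Sum>i\<in>I. u i x * w i z)"
  shows "1 \<le> real (card I) * purity n psi alpha"
proof -
  have fa: "finite alpha" using assms(2) finite_subset by blast
  have "(\<Sum>x\<in>Pow alpha. \<Sum>z\<in>Pow ({..<n} - alpha). (cmod (psi (x \<union> z)))\<^sup>2)\<^sup>2
     \<le> real (card I) * PP (Pow alpha) (Pow ({..<n} - alpha)) (\<lambda>x z. psi (x \<union> z))"
    by (rule key_general[where u=u and w=w]) (use assms fa in auto)
  then show ?thesis using T_one[OF assms(1,2)] purity_PP[of n psi alpha] by simp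
qed

lemma cp_exists: "has_cp_decomp n psi (card (Pow {..<n::nat}))"
proof -
  obtain h where h: "bij_betw h {0..<card (Pow {..<n})} (Pow {..<n})"
    using ex_bij_betw_nat_finite[of "Pow {..<n}"] by auto
  define c where "c i = psi (h i)" for i
  define phi where "phi i j b = (if b = (j \<in> h i) then 1 else 0 :: complex)" for i j b
  have pa: "prod_amp n (phi i) S = (if S = h i then 1 else 0)"
    if "S \<in> Pow {..<n}" "h i \<in> Pow {..<n}" for i S
  proof (cases "S = h i")
    case True then show ?thesis unfolding prod_amp_def phi_def by simp
  next
    case False
    have "\<exists>j. j < n \<and> (j \<in> S) \<noteq> (j \<in> h i)" using that False unfolding set_eq_iff by blast
    then obtain j where "j < n" "(j \<in> S) \<noteq> (j \<in> h i)" by blast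
    then have "prod_amp n (phi i) S = 0" unfolding prod_amp_def phi_def
      by (intro prod_zero) auto
    then show ?thesis using False by simp
  qed
  have "psi S = (\<Sum>i<card (Pow {..<n}). c i * prod_amp n (phi i) S)" if S: "S \<in> Pow {..<n}" for S
  proof -
    have "(\<Sum>i<card (Pow {..<n}). c i * prod_amp n (phi i) S)
        = (\<Sum>i\<in>{0..<card (Pow {..<n})}. (\<lambda>T. psi T * (if S = T then 1 else 0)) (h i))"
      unfolding atLeast0LessThan using S bij_betwE[OF h] by (intro sum.cong refl) (auto simp: c_def pa)
    also have "\<dots> = (\<Sum>T\<in>Pow {..<n}. psi T * (if S = T then 1 else 0))"
      by (rule sum.reindex_bij_betw[OF h])
    also have "\<dots> = psi S" using S by (simp add: if_distrib cong: if_cong)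
    finally show ?thesis by simp
  qed
  then show ?thesis unfolding has_cp_decomp_def by blast
qed

lemma sum_by_card:
  "(\<Sum>a\<in>Pow {..<n::nat}. g (card a)) = (\<Sum>k=0..n. real (n choose k) * (g k :: real))"
proof -
  have "(\<Sum>a\<in>Pow {..<n::nat}. g (card a)) = (\<Sum>k\<in>{0..n}. \<Sum>a\<in>{a. a \<in> Pow {..<n} \<and> card a = k}. g (card a))"
    by (rule sum.group[symmetric]) (auto simp: card_mono[of "{..<n}", simplified, THEN order_trans] intro: card_mono[of "{..<n}", simplified])
  also have "\<dots> = (\<Sum>k=0..n. real (n choose k) * g k)"
  proof (rule sum.cong[OF refl])
    fix k
    have "{a. a \<in> Pow {..<n} \<and> card a = k} = {B. B \<subseteq> {..<n} \<and> card B = k}" by auto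
    then have "card {a. a \<in> Pow {..<n} \<and> card a = k} = n choose k" using n_subsets[of "{..<n}" k] by simp
    moreover have "(\<Sum>a\<in>{a. a \<in> Pow {..<n} \<and> card a = k}. g (card a)) = (\<Sum>a\<in>{a. a \<in> Pow {..<n} \<and> card a = k}. g k)"
      by (intro sum.cong) auto
    ultimately show "(\<Sum>a\<in>{a. a \<in> Pow {..<n} \<and> card a = k}. g (card a)) = real (n choose k) * g k"
      by simp
  qed
  finally show ?thesis .
qed


theorem proposition4:
  fixes n :: nat and psi :: "nat set \<Rightarrow> complex" and R :: nat
  assumes "is_state n psi"
    and "cp_rank n psi = R"
  shows "conc_ent n psi \<le>
    1 - (1 / 2 ^ n) * (\<Sum>k = 0..n. real (n choose k) *
          max (1 / real R) (1 / 2 ^ (min k (n - k))))"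
proof -
  define g where "g k = max (1 / real R) (1 / 2 ^ (min k (n - k)))" for k
  have cp: "has_cp_decomp n psi R"
    using assms(2) LeastI[of "has_cp_decomp n psi", OF cp_exists] unfolding cp_rank_def by simp
  then obtain c phi where dec: "\<forall>S\<in>Pow {..<n}. psi S = (\<Sum>i<R. c i * prod_amp n (phi i) S)"
    unfolding has_cp_decomp_def by blast
  have pb: "g (card alpha) \<le> purity n psi alpha" if al: "alpha \<in> Pow {..<n}" for alpha
  proof -
    let ?A = "{..<n} - alpha"
    have al': "alpha \<subseteq> {..<n}" using al by simp
    have fa: "finite alpha" using al' finite_subset by blast
    have cA: "card ?A = n - card alpha" using al' by (simp add: card_Diff_subset fa)
    have b1: "1 \<le> real R * purity n psi alpha"
    proof -
      have "1 \<le> real (card {..<R}) * purity n psi alpha"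
      proof (rule bound[OF assms(1) al' finite_lessThan, where
            u="\<lambda>i x. c i * (\<Prod>j\<in>alpha. phi i j (j \<in> x))" and w="\<lambda>i z. \<Prod>j\<in>?A. phi i j (j \<in> z)"],
          intro ballI)
        fix x z assume x: "x \<in> Pow alpha" and z: "z \<in> Pow ?A"
        have "x \<union> z \<in> Pow {..<n}" using x z al' by auto
        then have "psi (x \<union> z) = (\<Sum>i<R. c i * prod_amp n (phi i) (x \<union> z))" using dec by blast
        also have "\<dots> = (\<Sum>i<R. c i * (\<Prod>j\<in>alpha. phi i j (j \<in> x)) * (\<Prod>j\<in>?A. phi i j (j \<in> z)))"
        proof (rule sum.cong[OF refl])
          fix i
          have "prod_amp n (phi i) (x \<union> z) = (\<Prod>j\<in>alpha \<union> ?A. phi i j (j \<in> x \<union> z))"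
            unfolding prod_amp_def using al' by (intro prod.cong) auto
          also have "\<dots> = (\<Prod>j\<in>alpha. phi i j (j \<in> x \<union> z)) * (\<Prod>j\<in>?A. phi i j (j \<in> x \<union> z))"
            by (rule prod.union_disjoint) (use fa in auto)
          also have "\<dots> = (\<Prod>j\<in>alpha. phi i j (j \<in> x)) * (\<Prod>j\<in>?A. phi i j (j \<in> z))"
          proof -
            have m1: "(j \<in> x \<union> z) = (j \<in> x)" if "j \<in> alpha" for j using that z by blast
            have m2: "(j \<in> x \<union> z) = (j \<in> z)" if "j \<in> ?A" for j using that x by blast
            show ?thesis using m1 m2 by (intro arg_cong2[where f="(*)"] prod.cong refl) simp_all
          qed
          finally show "c i * prod_amp n (phi i) (x \<union> z) = c i * (\<Prod>j\<in>alpha. phi i j (j \<in> x)) * (\<Prod>j\<in>?A. phi i j (j \<in> z))"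
            by simp
        qed
        finally show "psi (x \<union> z) = (\<Sum>i<R. c i * (\<Prod>j\<in>alpha. phi i j (j \<in> x)) * (\<Prod>j\<in>?A. phi i j (j \<in> z)))" .
      qed
      then show ?thesis by simp
    qed
    have b2: "1 \<le> 2 ^ card alpha * purity n psi alpha"
    proof -
      have "1 \<le> real (card (Pow alpha)) * purity n psi alpha"
        by (rule bound[OF assms(1) al' _, where u="\<lambda>y x. if x = y then 1 else 0" and w="\<lambda>y z. psi (y \<union> z)"])
          (use fa in \<open>auto simp: sum.delta if_distrib[where f="\<lambda>c. c * psi _"] cong: if_cong\<close>)
      then show ?thesis using fa by (simp add: card_Pow)
    qed
    have b3: "1 \<le> 2 ^ (n - card alpha) * purity n psi alpha"
    proof -
      have "1 \<le> real (card (Pow ?A)) * purity n psi alpha"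
        by (rule bound[OF assms(1) al' _, where u="\<lambda>y x. psi (x \<union> y)" and w="\<lambda>y z. if y = z then 1 else 0"])
          (auto simp: sum.delta sum.delta' if_distrib[where f="\<lambda>c. psi _ * c"] cong: if_cong)
      then show ?thesis using cA by (simp add: card_Pow)
    qed
    have p1: "1 / real R \<le> purity n psi alpha"
    proof (cases "R = 0")
      case True then show ?thesis using b1 by simp
    next
      case False then show ?thesis using b1 by (simp add: divide_le_eq mult.commute)
    qed
    have p2: "1 / 2 ^ (min (card alpha) (n - card alpha)) \<le> purity n psi alpha"
    proof (cases "card alpha \<le> n - card alpha")
      case True then show ?thesis using b2 by (simp add: min_def divide_le_eq mult.commute)
    next
      case False then show ?thesis using b3 by (simp add: min_def divide_le_eq mult.commute)
    qed
    show ?thesis unfolding g_def using p1 p2 by simp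
  qed
  have "(\<Sum>k = 0..n. real (n choose k) * g k) = (\<Sum>alpha\<in>Pow {..<n}. g (card alpha))"
    by (rule sum_by_card[symmetric])
  also have "\<dots> \<le> (\<Sum>alpha\<in>Pow {..<n}. purity n psi alpha)"
    by (rule sum_mono) (rule pb)
  finally have "(1 / 2 ^ n) * (\<Sum>k = 0..n. real (n choose k) * g k) \<le> (1 / 2 ^ n) * (\<Sum>alpha\<in>Pow {..<n}. purity n psi alpha)"
    by (intro mult_left_mono) auto
  then show ?thesis unfolding conc_ent_def g_def by linarith
qed

end
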